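(* Let $t\ge0$ and let ${\bf n}^*$ be the map ${\bf n}^*(x,y,z)=(\cos\theta(z)\cos(tz),\cos\theta(z)\sin(tz),\sin\theta(z))$, where $\theta$ solves $\theta''=t^2\cos\theta\sin\theta$ on $(0,1)$ with $\theta(0)=0$, $\theta(1)=\pi/2$ and $\theta$ given by $\int_0^{\theta(z)}(D-t^2\cos^2u)^{-1/2}du=z$ with $D>t^2$ determined by $\int_0^{\pi/2}(D-t^2\cos^2u)^{-1/2}du=1$. Let $\lambda:=|\nabla{\bf n}^*|^2+2t\,{\bf n}^*\cdot\nabla\times{\bf n}^*$. Then for every ${\bf n}\in\mathcal{A}$, $$I({\bf n})-I({\bf n}^* )=H({\bf n}-{\bf n}^* ),\qquad H({\bf v}):=\int_\Omega|\nabla{\bf v}|^2+2t\,{\bf v}\cdot\nabla\times{\bf v}-\lambda|{\bf v}|^2\,dx,$$ where $I({\bf n})=\int_\Omega|\nabla{\bf n}|^2+2t\,{\bf n}\cdot\nabla\times{\bf n}+t^2\,dx$.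
   Context: $\Omega=(-L_1,L_1)\times(-L_2,L_2)\times(0,1)$ with $L_1,L_2>0$, and $$\mathcal{A}=\{{\bf n}\in W^{1,2}(\Omega,\mathbb{S}^2):\ {\bf n}|_{z=0}={\bf e}_1,\ {\bf n}|_{z=1}={\bf e}_3,\ {\bf n}|_{x=-L_1}={\bf n}|_{x=L_1},\ {\bf n}|_{y=-L_2}={\bf n}|_{y=L_2}\},$$ $W^{1,2}(\Omega,\mathbb{S}^2)$ being the $W^{1,2}(\Omega,\mathbb{R}^3)$ maps with $|{\bf n}|=1$ a.e. *)

theory Defs
  imports "HOL-Analysis.Analysis"
begin

definition Omega :: "real \<Rightarrow> real \<Rightarrow> (real^3) set" where
  "Omega L1 L2 = {p. -L1 < p$1 \<and> p$1 < L1 \<and> -L2 < p$2 \<and> p$2 < L2 \<and> 0 < p$3 \<and> p$3 < 1}"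

definition pd :: "3 \<Rightarrow> (real^3 \<Rightarrow> real) \<Rightarrow> real^3 \<Rightarrow> real" where
  "pd k f x = deriv (\<lambda>s. f (x + s *\<^sub>R axis k 1)) 0"

definition C1_fun :: "(real^3 \<Rightarrow> real) \<Rightarrow> bool" where
  "C1_fun \<phi> \<longleftrightarrow> (\<forall>k x. (\<lambda>s. \<phi> (x + s *\<^sub>R axis k 1)) differentiable (at 0))
                 \<and> (\<forall>k. continuous_on UNIV (pd k \<phi>))"

text \<open>Dn k i is the weak partial derivative d/dx_k of the i-th component of n on Omega;
  n and Dn are in L^2(Omega), i.e. n is in W^{1,2}(Omega, R^3).\<close>
definition weak_grad :: "real \<Rightarrow> real \<Rightarrow> (real^3 \<Rightarrow> real^3) \<Rightarrow> (3 \<Rightarrow> 3 \<Rightarrow> real^3 \<Rightarrow> real) \<Rightarrow> bool" where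
  "weak_grad L1 L2 n Dn \<longleftrightarrow>
     (\<forall>i. set_borel_measurable lebesgue (Omega L1 L2) (\<lambda>x. n x $ i)
          \<and> set_integrable lebesgue (Omega L1 L2) (\<lambda>x. (n x $ i)^2))
   \<and> (\<forall>k i. set_borel_measurable lebesgue (Omega L1 L2) (Dn k i)
          \<and> set_integrable lebesgue (Omega L1 L2) (\<lambda>x. (Dn k i x)^2))
   \<and> (\<forall>\<phi>. C1_fun \<phi> \<and> (\<exists>K. compact K \<and> K \<subseteq> Omega L1 L2 \<and> (\<forall>x. x \<notin> K \<longrightarrow> \<phi> x = 0)) \<longrightarrow>
         (\<forall>k i. (LINT x:Omega L1 L2|lebesgue. n x $ i * pd k \<phi> x)
                = - (LINT x:Omega L1 L2|lebesgue. Dn k i x * \<phi> x)))"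

definition face_int :: "real \<Rightarrow> real \<Rightarrow> (real^3 \<Rightarrow> real) \<Rightarrow> real \<Rightarrow> real" where
  "face_int L1 L2 f c = integral {-L1..L1} (\<lambda>x. integral {-L2..L2} (\<lambda>y. f (vector [x, y, c])))"

text \<open>The admissible class A: n in W^{1,2}(Omega,S^2) (with weak gradient Dn), trace e1 on z=0,
  trace e3 on z=1, equal traces on x=-L1/x=L1 and on y=-L2/y=L2.  The trace conditions are
  expressed by the Gauss-Green formula tested against all C^1 functions on R^3 that are
  2L1-periodic in x and 2L2-periodic in y.\<close>
definition in_A :: "real \<Rightarrow> real \<Rightarrow> (real^3 \<Rightarrow> real^3) \<Rightarrow> (3 \<Rightarrow> 3 \<Rightarrow> real^3 \<Rightarrow> real) \<Rightarrow> bool" where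
  "in_A L1 L2 n Dn \<longleftrightarrow> weak_grad L1 L2 n Dn
   \<and> (AE x in lebesgue. x \<in> Omega L1 L2 \<longrightarrow> norm (n x) = 1)
   \<and> (\<forall>\<phi>. C1_fun \<phi> \<and> (\<forall>x. \<phi> (x + (2*L1) *\<^sub>R axis 1 1) = \<phi> x)
              \<and> (\<forall>x. \<phi> (x + (2*L2) *\<^sub>R axis 2 1) = \<phi> x) \<longrightarrow>
        (\<forall>i. (LINT x:Omega L1 L2|lebesgue. n x $ i * pd 1 \<phi> x + Dn 1 i x * \<phi> x) = 0
           \<and> (LINT x:Omega L1 L2|lebesgue. n x $ i * pd 2 \<phi> x + Dn 2 i x * \<phi> x) = 0
           \<and> (LINT x:Omega L1 L2|lebesgue. n x $ i * pd 3 \<phi> x + Dn 3 i x * \<phi> x)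
               = face_int L1 L2 (\<lambda>p. (axis 3 1 :: real^3) $ i * \<phi> p) 1
                 - face_int L1 L2 (\<lambda>p. (axis 1 1 :: real^3) $ i * \<phi> p) 0))"

definition gradsq :: "(3 \<Rightarrow> 3 \<Rightarrow> real^3 \<Rightarrow> real) \<Rightarrow> real^3 \<Rightarrow> real" where
  "gradsq Dv x = (\<Sum>k\<in>UNIV. \<Sum>i\<in>UNIV. (Dv k i x)^2)"

definition curl :: "(3 \<Rightarrow> 3 \<Rightarrow> real^3 \<Rightarrow> real) \<Rightarrow> real^3 \<Rightarrow> real^3" where
  "curl Dv x = vector [Dv 2 3 x - Dv 3 2 x, Dv 3 1 x - Dv 1 3 x, Dv 1 2 x - Dv 2 1 x]"

definition Ifun :: "real \<Rightarrow> real \<Rightarrow> real \<Rightarrow> (real^3 \<Rightarrow> real^3) \<Rightarrow> (3 \<Rightarrow> 3 \<Rightarrow> real^3 \<Rightarrow> real) \<Rightarrow> real" where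
  "Ifun L1 L2 t n Dn = (LINT x:Omega L1 L2|lebesgue. gradsq Dn x + 2 * t * (n x \<bullet> curl Dn x) + t^2)"

definition Hfun :: "real \<Rightarrow> real \<Rightarrow> real \<Rightarrow> (real^3 \<Rightarrow> real) \<Rightarrow> (real^3 \<Rightarrow> real^3) \<Rightarrow> (3 \<Rightarrow> 3 \<Rightarrow> real^3 \<Rightarrow> real) \<Rightarrow> real" where
  "Hfun L1 L2 t lam v Dv = (LINT x:Omega L1 L2|lebesgue. gradsq Dv x + 2 * t * (v x \<bullet> curl Dv x) - lam x * (norm (v x))^2)"

definition nstar :: "real \<Rightarrow> (real \<Rightarrow> real) \<Rightarrow> real^3 \<Rightarrow> real^3" where
  "nstar t \<theta> p = vector [cos (\<theta> (p$3)) * cos (t * p$3), cos (\<theta> (p$3)) * sin (t * p$3), sin (\<theta> (p$3))]"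

definition cgrad :: "(real^3 \<Rightarrow> real^3) \<Rightarrow> 3 \<Rightarrow> 3 \<Rightarrow> real^3 \<Rightarrow> real" where
  "cgrad f k i x = pd k (\<lambda>p. f p $ i) x"

end

theory Submission
  imports Defs
begin

lemma reg_F:
  fixes D t :: real assumes Dt: "D > t^2"
  shows "\<exists>G Gd. (\<forall>w::real. G (LBINT u=0..w. (D - t^2 * (cos u)^2) powr (-1/2)) = w)
     \<and> (\<forall>z. (G has_real_derivative Gd z) (at z))
     \<and> (\<forall>z. Gd z = sqrt (D - t^2*(cos (G z))^2))
     \<and> (\<forall>z. (Gd has_real_derivative t^2 * cos (G z) * sin (G z)) (at z))"
proof -
  define f where "f = (\<lambda>u::real. (D - t^2 * (cos u)^2) powr (-1/2))"
  define F where "F = (\<lambda>w::real. LBINT u=0..w. f u)"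
  have pos: "D - t^2 * (cos u)^2 > 0" for u
  proof -
    have "(cos u)^2 \<le> 1" using sin_cos_squared_add[of u] zero_le_power2[of "sin u"] by linarith  
    then have "t^2 * (cos u)^2 \<le> t^2" by (simp add: mult_left_le)
    then show ?thesis using Dt by linarith
  qed
  have contf: "continuous_on UNIV f"
    unfolding f_def using pos by (intro continuous_intros) auto
  have Fder: "(F has_real_derivative f w) (at w)" for w
  proof -
    have "(F has_vector_derivative f w) (at w within {-\<bar>w\<bar>-1..\<bar>w\<bar>+1})"
      unfolding F_def zero_ereal_def
      by (rule interval_integral_FTC2) (auto intro: continuous_on_subset[OF contf])
    then have "(F has_vector_derivative f w) (at w within {-\<bar>w\<bar>-1<..<\<bar>w\<bar>+1})"
      by (rule has_vector_derivative_within_subset) auto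
    then have "(F has_vector_derivative f w) (at w)"
      by (subst (asm) has_vector_derivative_within_open) auto
    then show ?thesis by (simp add: has_real_derivative_iff_has_vector_derivative)
  qed
  define m where "m = D powr (-1/2)"
  have Dpos: "D > 0" using Dt by (smt (verit) zero_le_power2)
  have mpos: "m > 0" unfolding m_def using Dpos by simp
  have fm: "f u \<ge> m" for u
    unfolding f_def m_def
    by (rule powr_mono2') (use pos[of u] in auto)
  have fpos: "f u > 0" for u using fm[of u] mpos by linarith
  have F0: "F 0 = 0" unfolding F_def by (simp add: zero_ereal_def[symmetric])
  have mono: "F a < F b" if "a < b" for a b
    using DERIV_pos_imp_increasing[OF that] Fder fpos by blast
  have inj: "F a = F b \<Longrightarrow> a = b" for a b
    using mono[of a b] mono[of b a] by (cases a b rule: linorder_cases) auto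
  have growth: "F w - m * w \<le> F v - m * v" if "w \<le> v" for w v
  proof -
    have "\<forall>x. w \<le> x \<and> x \<le> v \<longrightarrow> ((\<lambda>x. F x - m * x) has_real_derivative (f x - m)) (at x)"
      by (auto intro!: derivative_eq_intros Fder)
    then show ?thesis
      using DERIV_nonneg_imp_nondecreasing[OF that, of "\<lambda>x. F x - m * x"] fm
      by (smt (verit))
  qed
  have contF: "isCont F x" for x using Fder DERIV_isCont by blast
  have surj: "\<exists>w. F w = z" for z
  proof -
    define b where "b = \<bar>z\<bar> / m + 1"
    have b: "m * b > \<bar>z\<bar>" "b > 0" unfolding b_def using mpos by (auto simp: field_simps)
    have "F b \<ge> m * b" using growth[of 0 b] F0 b by auto
    moreover have "F (-b) \<le> - m * b" using growth[of "-b" 0] F0 b by auto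
    ultimately have "F (-b) \<le> z" "z \<le> F b" using b by auto
    then show ?thesis using IVT[of F "-b" z b] contF b by auto
  qed
  define G where "G = (\<lambda>z. SOME w. F w = z)"
  have FG: "F (G z) = z" for z unfolding G_def by (rule someI_ex) (rule surj)
  have GF: "G (F w) = w" for w using FG[of "F w"] inj by blast
  have contG: "isCont G z" for z
  proof -
    have "isCont G (F (G z))"
      by (rule isCont_inverse_function[where d=1]) (auto simp: GF contF)
    then show ?thesis by (simp add: FG)
  qed
  define Gd where "Gd = (\<lambda>z. sqrt (D - t^2*(cos (G z))^2))"
  have finv: "inverse (f u) = sqrt (D - t^2*(cos u)^2)" for u
    unfolding f_def using pos[of u]
    by (simp add: powr_minus powr_half_sqrt[symmetric])
  have Gder: "(G has_real_derivative Gd z) (at z)" for z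
  proof -
    have "(G has_real_derivative inverse (f (G z))) (at z)"
      by (rule DERIV_inverse_function[where f=F and a="z-1" and b="z+1"])
         (use fpos[of "G z"] in \<open>auto simp: FG contG Fder\<close>)
    then show ?thesis by (simp add: finv Gd_def)
  qed
  have Gdpos: "Gd z > 0" for z unfolding Gd_def using pos by simp
  have Gdder: "(Gd has_real_derivative t^2 * cos (G z) * sin (G z)) (at z)" for z
  proof -
    have q: "((\<lambda>z. D - t^2*(cos (G z))^2) has_real_derivative 2 * t^2 * cos (G z) * sin (G z) * Gd z) (at z)"
      apply (rule derivative_eq_intros Gder refl)+
      apply simp
      done
    have "((\<lambda>z. sqrt (D - t^2*(cos (G z))^2)) has_real_derivative
        inverse (sqrt (D - t^2*(cos (G z))^2)) / 2 * (2 * t^2 * cos (G z) * sin (G z) * Gd z)) (at z)"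
      by (rule DERIV_chain2[OF DERIV_real_sqrt q]) (use pos in simp)
    then show ?thesis using Gdpos[of z] unfolding Gd_def[symmetric]
      by (simp add: Gd_def field_simps)
  qed
  show ?thesis
    apply (rule exI[of _ G], rule exI[of _ Gd])
    using GF Gder Gdder unfolding F_def f_def Gd_def by auto
qed


lemma sbm_mult:
  assumes "set_borel_measurable M S f" "set_borel_measurable M S g"
  shows "set_borel_measurable M S (\<lambda>x. f x * g x :: real)"
proof -
  have "(\<lambda>x. indicator S x *\<^sub>R (f x * g x)) = (\<lambda>x. (indicator S x *\<^sub>R f x) * (indicator S x *\<^sub>R g x))"
    by (auto simp: indicator_def)
  then show ?thesis using assms unfolding set_borel_measurable_def by simp
qed

lemma sbm_int: "set_integrable M S f \<Longrightarrow> set_borel_measurable M S f"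
  unfolding set_integrable_def set_borel_measurable_def by (rule borel_measurable_integrable)

lemma L2_prod:
  fixes f g :: "_ \<Rightarrow> real"
  assumes "set_borel_measurable M S f" "set_borel_measurable M S g"
    "set_integrable M S (\<lambda>x. (f x)^2)" "set_integrable M S (\<lambda>x. (g x)^2)"
  shows "set_integrable M S (\<lambda>x. f x * g x)"
proof (rule set_integrable_bound[where f="\<lambda>x. (f x)^2 + (g x)^2"])
  show "set_integrable M S (\<lambda>x. (f x)^2 + (g x)^2)" using assms by simp
  show "set_borel_measurable M S (\<lambda>x. f x * g x)" using assms sbm_mult by blast
  have "norm (a * b) \<le> norm (a^2 + b^2)" for a b :: real
  proof -
    have "0 \<le> (\<bar>a\<bar> - \<bar>b\<bar>)^2" by simp
    then have "2 * \<bar>a\<bar> * \<bar>b\<bar> \<le> a^2 + b^2" by (simp add: power2_eq_square algebra_simps)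
    moreover have "0 \<le> \<bar>a\<bar> * \<bar>b\<bar>" by simp
    moreover have "norm (a * b) = \<bar>a\<bar> * \<bar>b\<bar>" by (simp add: abs_mult)
    moreover have "norm (a^2 + b^2) = a^2 + b^2" by simp
    ultimately show ?thesis by linarith
  qed
  then show "AE x in M. x \<in> S \<longrightarrow> norm (f x * g x) \<le> norm ((f x)^2 + (g x)^2)" by simp
qed

lemma cont_int:
  fixes h :: "real^3 \<Rightarrow> real"
  assumes "S \<subseteq> cbox a b" "S \<in> sets lebesgue" "continuous_on UNIV h"
  shows "set_integrable lebesgue S h"
proof -
  have "h absolutely_integrable_on cbox a b"
    by (rule absolutely_integrable_continuous) (rule continuous_on_subset[OF assms(3)], simp)
  then show ?thesis by (rule set_integrable_subset) (use assms in auto)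
qed

lemma cont_mult:
  fixes h f :: "real^3 \<Rightarrow> real"
  assumes "S \<subseteq> cbox a b" "S \<in> sets lebesgue" "continuous_on UNIV h"
    "set_integrable lebesgue S f"
  shows "set_integrable lebesgue S (\<lambda>x. h x * f x)"
proof -
  have "compact (h ` cbox a b)"
    by (rule compact_continuous_image) (use continuous_on_subset[OF assms(3)] in auto)
  then obtain B where B: "\<And>x. x \<in> cbox a b \<Longrightarrow> \<bar>h x\<bar> \<le> B"
    using compact_imp_bounded[of "h ` cbox a b"] unfolding bounded_iff by fastforce
  show ?thesis
  proof (rule set_integrable_bound[where f="\<lambda>x. B * f x"])
    show "set_integrable lebesgue S (\<lambda>x. B * f x)" using assms(4) by simp
    show "set_borel_measurable lebesgue S (\<lambda>x. h x * f x)"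
      using sbm_mult sbm_int cont_int[OF assms(1-3)] assms(4) by blast
    show "AE x in lebesgue. x \<in> S \<longrightarrow> norm (h x * f x) \<le> norm (B * f x)"
    proof (rule AE_I2, rule impI)
      fix x assume "x \<in> S"
      then have "\<bar>h x\<bar> \<le> B" using B assms(1) by auto
      then show "norm (h x * f x) \<le> norm (B * f x)"
        by (simp add: abs_mult mult_right_mono)
    qed
  qed
qed

lemma axis_nth_gen [simp]: "axis k (1::real) $ j = (if j = k then 1 else 0)"
  by (simp add: axis_def)

lemma comp3: "(x + s *\<^sub>R axis k 1) $ 3 = x $ 3 + (if k = 3 then s else (0::real))"
  by (auto simp: axis_def)

lemma pd_z:
  assumes "\<And>z. (h has_real_derivative h' z) (at z)"
  shows "pd k (\<lambda>p. h (p$3)) x = (if k = 3 then h' (x$3) else 0)"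
    and "(\<lambda>s. h ((x + s *\<^sub>R axis k 1)$3)) differentiable (at 0)"
proof -
  have "((\<lambda>s. h ((x + s *\<^sub>R axis k 1)$3)) has_real_derivative (if k = 3 then h' (x$3) else 0)) (at 0)"
  proof (cases "k = 3")
    case True
    have "((\<lambda>s. h (x$3 + s)) has_real_derivative h' (x$3 + 0) * 1) (at 0)"
      by (rule DERIV_chain2[OF assms]) (auto intro!: derivative_eq_intros)
    then show ?thesis using True by (simp add: comp3)
  next
    case False
    then show ?thesis by (simp add: comp3)
  qed
  then show "pd k (\<lambda>p. h (p$3)) x = (if k = 3 then h' (x$3) else 0)"
    and "(\<lambda>s. h ((x + s *\<^sub>R axis k 1)$3)) differentiable (at 0)"
    unfolding pd_def real_differentiable_def by (auto intro: DERIV_imp_deriv simp del: axis_nth_gen)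
qed

lemma C1_z:
  assumes "\<And>z. (h has_real_derivative h' z) (at z)" "continuous_on UNIV h'"
  shows "C1_fun (\<lambda>p. h (p$3))"
proof -
  have c: "continuous_on UNIV (\<lambda>x::real^3. h' (x$3))"
    by (rule continuous_on_compose2[OF assms(2)]) (auto intro!: continuous_intros)
  have e: "pd k (\<lambda>p. h (p$3)) = (\<lambda>x. if k = 3 then h' (x$3) else 0)" for k
    by (rule ext) (rule pd_z(1)[OF assms(1)])
  show ?thesis unfolding C1_fun_def
  proof (intro conjI allI)
    fix k and x :: "real^3" show "(\<lambda>s. h ((x + s *\<^sub>R axis k 1) $ 3)) differentiable at 0"
      by (rule pd_z(2)[OF assms(1)])
  next
    fix k show "continuous_on UNIV (pd k (\<lambda>p. h (p $ 3)))"
      unfolding e by (cases "k = 3") (use c in auto)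
  qed
qed

lemma periodic_z: "(\<lambda>p::real^3. h (p$3)) (x + c *\<^sub>R axis 1 1) = h (x$3)"
  "(\<lambda>p. h (p$3)) (x + c *\<^sub>R axis 2 1) = h (x$3)"
  by (simp_all add: comp3)

lemma face_zero:
  assumes "\<And>p::real^3. p$3 = c \<Longrightarrow> f p = 0"
  shows "face_int L1 L2 f c = 0"
  unfolding face_int_def using assms by simp

lemma Omega_props:
  "Omega L1 L2 \<in> sets lebesgue"
  "Omega L1 L2 \<subseteq> cbox (vector [-L1, -L2, 0]) (vector [L1, L2, 1])"
proof -
  have op: "open (Omega L1 L2)" unfolding Omega_def
    by (intro open_Collect_conj open_Collect_less continuous_intros)
  show sub: "Omega L1 L2 \<subseteq> cbox (vector [-L1, -L2, 0]) (vector [L1, L2, 1])"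
    unfolding Omega_def cbox_def by (auto simp: inner_axis forall_3 Basis_vec_def cart_eq_inner_axis[symmetric])
  have "bounded (Omega L1 L2)" using sub bounded_cbox bounded_subset by blast
  then show "Omega L1 L2 \<in> sets lebesgue" using lmeasurable_open[OF _ op] by (simp add: fmeasurableD)
qed


theorem mainTheorem7:
  fixes L1 L2 t D :: real and \<theta> :: "real \<Rightarrow> real"
    and n :: "real^3 \<Rightarrow> real^3" and Dn :: "3 \<Rightarrow> 3 \<Rightarrow> real^3 \<Rightarrow> real"
  assumes "L1 > 0" and "L2 > 0" and "t \<ge> 0"
    and "continuous_on {0..1} \<theta>"
    and "\<forall>z\<in>{0<..<1}. \<theta> differentiable (at z)
            \<and> (deriv \<theta> has_real_derivative t^2 * cos (\<theta> z) * sin (\<theta> z)) (at z)"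
    and "\<theta> 0 = 0" and "\<theta> 1 = pi / 2"
    and "D > t^2"
    and "(LBINT u=0..pi/2. (D - t^2 * (cos u)^2) powr (-1/2)) = 1"
    and "\<forall>z\<in>{0..1}. (LBINT u=0..\<theta> z. (D - t^2 * (cos u)^2) powr (-1/2)) = z"
    and "in_A L1 L2 n Dn"
  shows "Ifun L1 L2 t n Dn - Ifun L1 L2 t (nstar t \<theta>) (cgrad (nstar t \<theta>))
         = Hfun L1 L2 t
             (\<lambda>x. gradsq (cgrad (nstar t \<theta>)) x
                  + 2 * t * (nstar t \<theta> x \<bullet> curl (cgrad (nstar t \<theta>)) x))
             (\<lambda>x. n x - nstar t \<theta> x)
             (\<lambda>k i x. Dn k i x - cgrad (nstar t \<theta>) k i x)"
proof -
  note hthF = assms(10) and hA = assms(11)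
  obtain G Gd where GF: "\<And>w::real. G (LBINT u=0..w. (D - t^2 * (cos u)^2) powr (-1/2)) = w"
    and Gder: "\<And>z. (G has_real_derivative Gd z) (at z)"
    and Gd_eq: "\<And>z. Gd z = sqrt (D - t^2*(cos (G z))^2)"
    and Gdder: "\<And>z. (Gd has_real_derivative t^2 * cos (G z) * sin (G z)) (at z)"
    using reg_F[OF assms(8)] by blast
  have thG: "\<theta> z = G z" if "z \<in> {0..1}" for z
    using GF[of "\<theta> z"] hthF that by simp
  have G0: "G 0 = 0" and G1: "G 1 = pi/2" using thG[of 0] thG[of 1] assms(6,7) by auto
  have contG: "continuous_on UNIV G" using Gder
    by (meson DERIV_isCont continuous_at_imp_continuous_on)
  have contGd: "continuous_on UNIV Gd" using Gdder
    by (meson DERIV_isCont continuous_at_imp_continuous_on)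
  define N1 where "N1 = (\<lambda>z. cos (G z) * cos (t * z))"
  define N2 where "N2 = (\<lambda>z. cos (G z) * sin (t * z))"
  define N3 where "N3 = (\<lambda>z. sin (G z))"
  define d1 where "d1 = (\<lambda>z. - sin (G z) * Gd z * cos (t * z) - t * cos (G z) * sin (t * z))"
  define d2 where "d2 = (\<lambda>z. - sin (G z) * Gd z * sin (t * z) + t * cos (G z) * cos (t * z))"
  define d3 where "d3 = (\<lambda>z. cos (G z) * Gd z)"
  define p1 where "p1 = (\<lambda>z. - sin (G z) * Gd z * cos (t * z))"
  define p2 where "p2 = (\<lambda>z. - sin (G z) * Gd z * sin (t * z))"
  define p3 where "p3 = (\<lambda>z. cos (G z) * Gd z)"
  define q1 where "q1 = (\<lambda>z. - cos (G z) * (Gd z)^2 * cos (t * z) - t^2 * cos (G z) * (sin (G z))^2 * cos (t * z) + t * sin (G z) * Gd z * sin (t * z))"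
  define q2 where "q2 = (\<lambda>z. - cos (G z) * (Gd z)^2 * sin (t * z) - t^2 * cos (G z) * (sin (G z))^2 * sin (t * z) - t * sin (G z) * Gd z * cos (t * z))"
  define q3 where "q3 = (\<lambda>z. - sin (G z) * (Gd z)^2 + t^2 * (cos (G z))^2 * sin (G z))"
  define lam where "lam = (\<lambda>z. (d1 z)^2 + (d2 z)^2 + (d3 z)^2 + 2 * t * (N2 z * d1 z - N1 z * d2 z))"
  have dN1: "\<And>z. (N1 has_real_derivative d1 z) (at z)"
    unfolding N1_def d1_def
    apply (rule derivative_eq_intros Gder refl)+
    apply (simp add: algebra_simps)
    done
  have dN2: "\<And>z. (N2 has_real_derivative d2 z) (at z)"
    unfolding N2_def d2_def
    apply (rule derivative_eq_intros Gder refl)+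
    apply (simp add: algebra_simps)
    done
  have dN3: "\<And>z. (N3 has_real_derivative d3 z) (at z)"
    unfolding N3_def d3_def
    by (rule derivative_eq_intros Gder refl)+
  have dp1: "\<And>z. (p1 has_real_derivative q1 z) (at z)"
    unfolding p1_def q1_def
    apply (rule derivative_eq_intros Gder Gdder refl)+
    apply (simp add: algebra_simps power2_eq_square)
    done
  have dp2: "\<And>z. (p2 has_real_derivative q2 z) (at z)"
    unfolding p2_def q2_def
    apply (rule derivative_eq_intros Gder Gdder refl)+
    apply (simp add: algebra_simps power2_eq_square)
    done
  have dp3: "\<And>z. (p3 has_real_derivative q3 z) (at z)"
    unfolding p3_def q3_def
    apply (rule derivative_eq_intros Gder Gdder refl)+
    apply (simp add: algebra_simps power2_eq_square)
    done
  have cd: "continuous_on UNIV d1" "continuous_on UNIV d2" "continuous_on UNIV d3"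
     "continuous_on UNIV q1" "continuous_on UNIV q2" "continuous_on UNIV q3"
     "continuous_on UNIV N1" "continuous_on UNIV N2" "continuous_on UNIV N3"
     "continuous_on UNIV p1" "continuous_on UNIV p2" "continuous_on UNIV p3" "continuous_on UNIV lam"
    unfolding d1_def d2_def d3_def q1_def q2_def q3_def N1_def N2_def N3_def p1_def p2_def p3_def lam_def
    by (intro continuous_intros contG contGd)+
  have EL: "p1 z = d1 z + t * N2 z" "p2 z = d2 z - t * N1 z" "p3 z = d3 z"
    "q1 z = - t * d2 z - lam z * N1 z" "q2 z = t * d1 z - lam z * N2 z" "q3 z = - lam z * N3 z"
    "(N1 z)^2 + (N2 z)^2 + (N3 z)^2 = 1" for z
  proof -
    have a: "(cos (G z))^2 + (sin (G z))^2 = 1" "(cos (t*z))^2 + (sin (t*z))^2 = 1" by simp_all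
    show "p1 z = d1 z + t * N2 z" "p2 z = d2 z - t * N1 z" "p3 z = d3 z"
      unfolding p1_def d1_def N2_def p2_def d2_def N1_def p3_def d3_def by (simp_all add: algebra_simps)
    show "q1 z = - t * d2 z - lam z * N1 z" using a unfolding q1_def lam_def d1_def d2_def d3_def N1_def N2_def
      by algebra
    show "q2 z = t * d1 z - lam z * N2 z" using a unfolding q2_def lam_def d1_def d2_def d3_def N1_def N2_def
      by algebra
    show "q3 z = - lam z * N3 z" using a unfolding q3_def lam_def d1_def d2_def d3_def N1_def N2_def N3_def
      by algebra
    show "(N1 z)^2 + (N2 z)^2 + (N3 z)^2 = 1" using a unfolding N1_def N2_def N3_def
      by algebra
  qed
  define S where "S = Omega L1 L2"
  have Ssets: "S \<in> sets lebesgue" and Ssub: "S \<subseteq> cbox (vector [-L1, -L2, 0]) (vector [L1, L2, 1])"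
    unfolding S_def by (rule Omega_props)+
  have S3: "0 < x$3" "x$3 < 1" if "x \<in> S" for x using that unfolding S_def Omega_def by auto
  have thG': "\<theta> z = G z" if "0 \<le> z" "z \<le> 1" for z using thG that by auto
  have nst: "nstar t \<theta> x = vector [N1 (x$3), N2 (x$3), N3 (x$3)]" if "x \<in> S" for x
    using thG'[of "x$3"] S3[OF that] unfolding nstar_def N1_def N2_def N3_def by auto
  define dv where "dv = (\<lambda>z. vector [d1 z, d2 z, d3 z] :: real^3)"
  have dvi: "((\<lambda>z. (vector [N1 z, N2 z, N3 z] :: real^3) $ i) has_real_derivative dv z $ i) (at z)" for i z
    using exhaust_3[of i] dN1 dN2 dN3 unfolding dv_def by auto
  have deriv_c: "deriv (\<lambda>s::real. c::real) 0 = 0" for c by (rule DERIV_imp_deriv) (rule DERIV_const)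
  have cg: "cgrad (nstar t \<theta>) k i x = (if k = 3 then dv (x$3) $ i else 0)" if x: "x \<in> S" for k i x
  proof -
    define Vt where "Vt = (\<lambda>z. vector [cos (\<theta> z) * cos (t*z), cos (\<theta> z) * sin (t*z), sin (\<theta> z)] :: real^3)"
    have e: "(\<lambda>s. nstar t \<theta> (x + s *\<^sub>R axis k 1) $ i) = (\<lambda>s. Vt (x$3 + (if k = 3 then s else 0)) $ i)"
      by (simp only: nstar_def Vt_def comp3)
    show ?thesis
    proof (cases "k = 3")
      case True
      have "((\<lambda>s. (\<lambda>z. (vector [N1 z, N2 z, N3 z] :: real^3) $ i) (x$3 + s)) has_real_derivative dv (x$3 + 0) $ i * 1) (at 0)"
        by (rule DERIV_chain2[OF dvi]) (auto intro!: derivative_eq_intros)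
      then have d0: "((\<lambda>s. (vector [N1 (x$3 + s), N2 (x$3 + s), N3 (x$3 + s)] :: real^3) $ i) has_real_derivative dv (x$3) $ i) (at 0)"
        by simp
      have eqV: "Vt z = vector [N1 z, N2 z, N3 z]" if "0 \<le> z" "z \<le> 1" for z
        using thG'[OF that] unfolding Vt_def N1_def N2_def N3_def by simp
      have "((\<lambda>s. Vt (x$3 + s) $ i) has_real_derivative dv (x$3) $ i) (at 0)"
      proof (rule has_field_derivative_transform_within_open[OF d0 open_greaterThanLessThan])
        show "0 \<in> {-(x$3)<..<1 - x$3}" using S3[OF x] by simp
        fix y assume "y \<in> {-(x$3)<..<1 - x$3}"
        then have "0 \<le> x$3 + y" "x$3 + y \<le> 1" by auto
        then show "(vector [N1 (x$3 + y), N2 (x$3 + y), N3 (x$3 + y)] :: real^3) $ i = Vt (x$3 + y) $ i"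
          by (simp add: eqV)
      qed
      then show ?thesis using True unfolding cgrad_def pd_def e by (simp add: DERIV_imp_deriv)
    next
      case False
      then show ?thesis unfolding cgrad_def pd_def e by (simp add: deriv_c)
    qed
  qed
  have wg: "weak_grad L1 L2 n Dn" and AEn: "AE x in lebesgue. x \<in> S \<longrightarrow> norm (n x) = 1"
    and tst: "\<forall>\<phi>. C1_fun \<phi> \<and> (\<forall>x. \<phi> (x + (2*L1) *\<^sub>R axis 1 1) = \<phi> x)
              \<and> (\<forall>x. \<phi> (x + (2*L2) *\<^sub>R axis 2 1) = \<phi> x) \<longrightarrow>
        (\<forall>i. (LINT x:S|lebesgue. n x $ i * pd 1 \<phi> x + Dn 1 i x * \<phi> x) = 0
           \<and> (LINT x:S|lebesgue. n x $ i * pd 2 \<phi> x + Dn 2 i x * \<phi> x) = 0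
           \<and> (LINT x:S|lebesgue. n x $ i * pd 3 \<phi> x + Dn 3 i x * \<phi> x)
               = face_int L1 L2 (\<lambda>p. (axis 3 1 :: real^3) $ i * \<phi> p) 1
                 - face_int L1 L2 (\<lambda>p. (axis 1 1 :: real^3) $ i * \<phi> p) 0)"
    using hA unfolding in_A_def S_def by blast+
  have nm: "set_borel_measurable lebesgue S (\<lambda>x. n x $ i)" "set_integrable lebesgue S (\<lambda>x. (n x $ i)^2)" for i
    using wg unfolding weak_grad_def S_def by blast+
  have Dm: "set_borel_measurable lebesgue S (Dn k i)" "set_integrable lebesgue S (\<lambda>x. (Dn k i x)^2)" for k i
    using wg unfolding weak_grad_def S_def by blast+
  have cz: "continuous_on UNIV (\<lambda>x::real^3. h (x$3))" if "continuous_on UNIV h" for h :: "real \<Rightarrow> real"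
    by (rule continuous_on_compose2[OF that]) (auto intro!: continuous_intros)
  have cint: "set_integrable lebesgue S (\<lambda>x. h (x$3))" if "continuous_on UNIV h" for h :: "real \<Rightarrow> real"
    by (rule cont_int[OF Ssub Ssets cz[OF that]])
  have const_int: "set_integrable lebesgue S (\<lambda>x. c)" for c :: real
    by (rule cont_int[OF Ssub Ssets]) simp
  have one_m: "set_borel_measurable lebesgue S (\<lambda>x. 1::real)" by (rule sbm_int[OF const_int])
  have one_sq: "set_integrable lebesgue S (\<lambda>x. (1::real)^2)" by (rule const_int)
  have n_int: "set_integrable lebesgue S (\<lambda>x. n x $ i)" for i
    using L2_prod[OF nm(1) one_m nm(2) one_sq] by simp
  have D_int: "set_integrable lebesgue S (\<lambda>x. Dn k i x)" for k i
    using L2_prod[OF Dm(1) one_m Dm(2) one_sq] by simp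
  have nD: "set_integrable lebesgue S (\<lambda>x. n x $ j * Dn k i x)" for j k i
    by (rule L2_prod[OF nm(1) Dm(1) nm(2) Dm(2)])
  have cmult: "set_integrable lebesgue S (\<lambda>x. f x * h (x$3))"
    if "continuous_on UNIV h" "set_integrable lebesgue S f" for h :: "real \<Rightarrow> real" and f
  proof -
    have "set_integrable lebesgue S (\<lambda>x. h (x$3) * f x)"
      by (rule cont_mult[OF Ssub Ssets cz[OF that(1)] that(2)])
    then show ?thesis by (simp add: mult.commute)
  qed
  have ci: "set_integrable lebesgue S (\<lambda>x. n x $ i * h (x$3))"
    "set_integrable lebesgue S (\<lambda>x. Dn k i x * h (x$3))" if "continuous_on UNIV h" for h :: "real \<Rightarrow> real" and i k
    using cmult[OF that n_int] cmult[OF that D_int] by auto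
  define A where "A = (\<lambda>x. gradsq Dn x + 2 * t * (n x \<bullet> curl Dn x) + t^2)"
  define B where "B = (\<lambda>x. gradsq (cgrad (nstar t \<theta>)) x + 2 * t * (nstar t \<theta> x \<bullet> curl (cgrad (nstar t \<theta>)) x) + t^2)"
  define Br where "Br = (\<lambda>x. (n x $ 1 * q1 (x$3) + Dn 3 1 x * p1 (x$3)) + (n x $ 2 * q2 (x$3) + Dn 3 2 x * p2 (x$3))
      + (n x $ 3 * q3 (x$3) + Dn 3 3 x * p3 (x$3))
      + t * (Dn 2 3 x * N1 (x$3) - Dn 1 3 x * N2 (x$3) + Dn 1 2 x * N3 (x$3) - Dn 2 1 x * N3 (x$3)))"
  define E where "E = (\<lambda>x. lam (x$3) * ((n x $ 1)^2 + (n x $ 2)^2 + (n x $ 3)^2 - 1))"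
  have A_eq: "A = (\<lambda>x. (Dn 1 1 x)^2 + (Dn 1 2 x)^2 + (Dn 1 3 x)^2 + (Dn 2 1 x)^2 + (Dn 2 2 x)^2
      + (Dn 2 3 x)^2 + (Dn 3 1 x)^2 + (Dn 3 2 x)^2 + (Dn 3 3 x)^2
      + 2 * t * (n x $ 1 * Dn 2 3 x - n x $ 1 * Dn 3 2 x + n x $ 2 * Dn 3 1 x - n x $ 2 * Dn 1 3 x
         + n x $ 3 * Dn 1 2 x - n x $ 3 * Dn 2 1 x) + t^2)"
    unfolding A_def gradsq_def curl_def by (rule ext) (simp add: inner_vec_def sum_3 algebra_simps)
  have Aint: "set_integrable lebesgue S A"
    unfolding A_eq by (intro set_integral_add(1) set_integral_diff(1) set_integrable_mult_right nD Dm(2) const_int)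
  have B_S: "B x = lam (x$3) + t^2" if x: "x \<in> S" for x
    unfolding B_def gradsq_def curl_def
    by (simp add: nst[OF x] cg[OF x] dv_def lam_def inner_vec_def sum_3 algebra_simps)
  have Bint: "set_integrable lebesgue S B"
  proof -
    have "set_integrable lebesgue S (\<lambda>x. lam (x$3) + t^2)"
      by (intro set_integral_add(1) cint cd const_int)
    then show ?thesis using set_integrable_cong[OF refl refl, of S B "\<lambda>x. lam (x$3) + t^2"] B_S by auto
  qed
  have Brint: "set_integrable lebesgue S Br"
    unfolding Br_def by (intro set_integral_add(1) set_integral_diff(1) set_integrable_mult_right ci cd)
  have Eint: "set_integrable lebesgue S E"
  proof -
    have "set_integrable lebesgue S (\<lambda>x. (n x $ 1)^2 + (n x $ 2)^2 + (n x $ 3)^2 - 1)"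
      by (intro set_integral_add(1) set_integral_diff(1) nm(2) const_int)
    from cmult[OF cd(13) this] show ?thesis unfolding E_def by (simp add: mult.commute)
  qed
  have Hval: "Hfun L1 L2 t
             (\<lambda>x. gradsq (cgrad (nstar t \<theta>)) x
                  + 2 * t * (nstar t \<theta> x \<bullet> curl (cgrad (nstar t \<theta>)) x))
             (\<lambda>x. n x - nstar t \<theta> x)
             (\<lambda>k i x. Dn k i x - cgrad (nstar t \<theta>) k i x)
      = (LINT x:S|lebesgue. A x - B x - 2 * Br x - E x)"
    unfolding Hfun_def S_def[symmetric]
  proof (rule set_lebesgue_integral_cong[OF Ssets], intro allI impI)
    fix x assume x: "x \<in> S"
    have nx: "(norm (n x - nstar t \<theta> x))^2 = (n x $ 1 - N1 (x$3))^2 + (n x $ 2 - N2 (x$3))^2 + (n x $ 3 - N3 (x$3))^2"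
      by (simp only: power2_norm_eq_inner) (simp add: nst[OF x] inner_vec_def sum_3 power2_eq_square)
    show "gradsq (\<lambda>k i x. Dn k i x - cgrad (nstar t \<theta>) k i x) x +
          2 * t * ((n x - nstar t \<theta> x) \<bullet> curl (\<lambda>k i x. Dn k i x - cgrad (nstar t \<theta>) k i x) x) -
          (gradsq (cgrad (nstar t \<theta>)) x + 2 * t * (nstar t \<theta> x \<bullet> curl (cgrad (nstar t \<theta>)) x)) *
          (norm (n x - nstar t \<theta> x))\<^sup>2 =
          A x - B x - 2 * Br x - E x"
      using EL(7)[of "x$3"]
      unfolding nx A_def B_def Br_def E_def gradsq_def curl_def
      apply (simp add: nst[OF x] cg[OF x] dv_def inner_vec_def sum_3 EL(1-6) lam_def)
      apply algebra
      done
  qed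
  have tst': "(LINT x:S|lebesgue. Dn 1 i x * h (x$3)) = 0 \<and> (LINT x:S|lebesgue. Dn 2 i x * h (x$3)) = 0
      \<and> (LINT x:S|lebesgue. n x $ i * h' (x$3) + Dn 3 i x * h (x$3))
          = face_int L1 L2 (\<lambda>p. (axis 3 1 :: real^3) $ i * h (p$3)) 1
            - face_int L1 L2 (\<lambda>p. (axis 1 1 :: real^3) $ i * h (p$3)) 0"
    if hd: "\<And>z. (h has_real_derivative h' z) (at z)" and hc: "continuous_on UNIV h'" for h h' :: "real \<Rightarrow> real" and i
  proof -
    have "C1_fun (\<lambda>p. h (p$3))" by (rule C1_z[OF hd hc])
    moreover have "\<forall>x. (\<lambda>p::real^3. h (p$3)) (x + (2*L1) *\<^sub>R axis 1 1) = (\<lambda>p. h (p$3)) x"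
      "\<forall>x. (\<lambda>p::real^3. h (p$3)) (x + (2*L2) *\<^sub>R axis 2 1) = (\<lambda>p. h (p$3)) x"
      by (simp_all add: periodic_z)
    ultimately have "(LINT x:S|lebesgue. n x $ i * pd 1 (\<lambda>p. h (p$3)) x + Dn 1 i x * h (x$3)) = 0
           \<and> (LINT x:S|lebesgue. n x $ i * pd 2 (\<lambda>p. h (p$3)) x + Dn 2 i x * h (x$3)) = 0
           \<and> (LINT x:S|lebesgue. n x $ i * pd 3 (\<lambda>p. h (p$3)) x + Dn 3 i x * h (x$3))
               = face_int L1 L2 (\<lambda>p. (axis 3 1 :: real^3) $ i * h (p$3)) 1
                 - face_int L1 L2 (\<lambda>p. (axis 1 1 :: real^3) $ i * h (p$3)) 0"
      using tst by blast
    then show ?thesis by (simp add: pd_z(1)[OF hd] del: axis_nth_gen)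
  qed
  have z1: "(LINT x:S|lebesgue. n x $ 1 * q1 (x$3) + Dn 3 1 x * p1 (x$3)) = 0"
  proof -
    have "face_int L1 L2 (\<lambda>p. (axis 3 1 :: real^3) $ 1 * p1 (p$3)) 1 = 0"
      by (rule face_zero) simp
    moreover have "face_int L1 L2 (\<lambda>p. (axis 1 1 :: real^3) $ 1 * p1 (p$3)) 0 = 0"
      by (rule face_zero) (simp add: p1_def G0)
    ultimately show ?thesis using tst'[OF dp1 cd(4), of 1] by simp
  qed
  have z2: "(LINT x:S|lebesgue. n x $ 2 * q2 (x$3) + Dn 3 2 x * p2 (x$3)) = 0"
  proof -
    have "face_int L1 L2 (\<lambda>p. (axis 3 1 :: real^3) $ 2 * p2 (p$3)) 1 = 0"
      by (rule face_zero) simp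
    moreover have "face_int L1 L2 (\<lambda>p. (axis 1 1 :: real^3) $ 2 * p2 (p$3)) 0 = 0"
      by (rule face_zero) simp
    ultimately show ?thesis using tst'[OF dp2 cd(5), of 2] by simp
  qed
  have z3: "(LINT x:S|lebesgue. n x $ 3 * q3 (x$3) + Dn 3 3 x * p3 (x$3)) = 0"
  proof -
    have "face_int L1 L2 (\<lambda>p. (axis 3 1 :: real^3) $ 3 * p3 (p$3)) 1 = 0"
      by (rule face_zero) (simp add: p3_def G1)
    moreover have "face_int L1 L2 (\<lambda>p. (axis 1 1 :: real^3) $ 3 * p3 (p$3)) 0 = 0"
      by (rule face_zero) simp
    ultimately show ?thesis using tst'[OF dp3 cd(6), of 3] by simp
  qed
  have xy: "(LINT x:S|lebesgue. Dn 2 3 x * N1 (x$3)) = 0" "(LINT x:S|lebesgue. Dn 1 3 x * N2 (x$3)) = 0"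
    "(LINT x:S|lebesgue. Dn 1 2 x * N3 (x$3)) = 0" "(LINT x:S|lebesgue. Dn 2 1 x * N3 (x$3)) = 0"
    using tst'[OF dN1 cd(1), of 3] tst'[OF dN2 cd(2), of 3] tst'[OF dN3 cd(3), of 2] tst'[OF dN3 cd(3), of 1]
    by auto
  have zi: "set_integrable lebesgue S (\<lambda>x. n x $ i * h1 (x$3) + Dn 3 i x * h2 (x$3))"
    if "continuous_on UNIV h1" "continuous_on UNIV h2" for h1 h2 :: "real \<Rightarrow> real" and i
    by (intro set_integral_add(1) ci that)
  have Br0: "(LINT x:S|lebesgue. Br x) = 0"
  proof -
    have "(LINT x:S|lebesgue. Br x) = (LINT x:S|lebesgue. n x $ 1 * q1 (x$3) + Dn 3 1 x * p1 (x$3))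
      + (LINT x:S|lebesgue. n x $ 2 * q2 (x$3) + Dn 3 2 x * p2 (x$3))
      + (LINT x:S|lebesgue. n x $ 3 * q3 (x$3) + Dn 3 3 x * p3 (x$3))
      + t * ((LINT x:S|lebesgue. Dn 2 3 x * N1 (x$3)) - (LINT x:S|lebesgue. Dn 1 3 x * N2 (x$3))
         + (LINT x:S|lebesgue. Dn 1 2 x * N3 (x$3)) - (LINT x:S|lebesgue. Dn 2 1 x * N3 (x$3)))"
      unfolding Br_def
      by (simp only: set_integral_add(2) set_integral_diff(2) set_integral_mult_right
          set_integral_add(1) set_integral_diff(1) set_integrable_mult_right zi ci cd)
    then show ?thesis using z1 z2 z3 xy by simp
  qed
  have E0: "(LINT x:S|lebesgue. E x) = 0"
  proof -
    have "integral\<^sup>L lebesgue (\<lambda>x. indicator S x *\<^sub>R E x) = integral\<^sup>L lebesgue (\<lambda>x::real^3. 0::real)"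
    proof (rule integral_cong_AE)
      show "(\<lambda>x. indicator S x *\<^sub>R E x) \<in> borel_measurable lebesgue"
        using Eint unfolding set_integrable_def by (rule borel_measurable_integrable)
      show "(\<lambda>x::real^3. 0::real) \<in> borel_measurable lebesgue" by simp
      show "AE x in lebesgue. indicator S x *\<^sub>R E x = 0"
        using AEn
      proof (rule AE_mp[OF _ AE_I2], intro impI)
        fix x assume h: "x \<in> S \<longrightarrow> norm (n x) = 1"
        show "indicator S x *\<^sub>R E x = 0"
        proof (cases "x \<in> S")
          case True
          then have "(norm (n x))^2 = 1" using h by simp
          then have "(n x $ 1)^2 + (n x $ 2)^2 + (n x $ 3)^2 = 1"
            by (simp only: power2_norm_eq_inner) (simp add: inner_vec_def sum_3 power2_eq_square)
          then show ?thesis unfolding E_def by simp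
        qed simp
      qed
    qed
    then show ?thesis unfolding set_lebesgue_integral_def by simp
  qed
  have IA: "Ifun L1 L2 t n Dn = (LINT x:S|lebesgue. A x)" unfolding Ifun_def A_def S_def ..
  have IB: "Ifun L1 L2 t (nstar t \<theta>) (cgrad (nstar t \<theta>)) = (LINT x:S|lebesgue. B x)"
    unfolding Ifun_def B_def S_def ..
  have "(LINT x:S|lebesgue. A x - B x - 2 * Br x - E x)
      = (LINT x:S|lebesgue. A x) - (LINT x:S|lebesgue. B x) - 2 * (LINT x:S|lebesgue. Br x) - (LINT x:S|lebesgue. E x)"
    using Aint Bint Brint Eint by simp
  then show ?thesis using Hval IA IB Br0 E0 by simp
qed

end
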